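(* Let $z=(L,\xi)\in Z$ with $L>0$ and assume there are a direction $u\in\mathbb R^2$ and $c>0$ such that $\xi_\tau^Tu\ge c$ almost everywhere on $]0,1[$. Then the derivative $h'(z):\delta Z\to L^\infty(]0,1[)$, $h'(z)[\delta L,\delta\xi]=2\xi_\tau^T\delta\xi_\tau-2L\,\delta L$, is surjective, i.e. $z$ is a regular point.
   Context: $X=\{\xi\in W^{1,\infty}(]0,1[,\mathbb R^2):\xi(0)=x_O,\xi(1)=x_D\}$ for fixed points $x_O,x_D\in\mathbb R^2$; $\delta X=W^{1,\infty}_0(]0,1[,\mathbb R^2)$; $\xi_\tau$ denotes the derivative of $\xi$. $Z=\mathbb R\times X$, $\delta Z=\mathbb R\times\delta X$, and $h:Z\to L^\infty(]0,1[)$, $h(L,\xi)=\xi_\tau^T\xi_\tau-L^2$. *)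

theory Defs
  imports "HOL-Analysis.Analysis"
begin

definition Linf01 :: "(real \<Rightarrow> 'a::euclidean_space) \<Rightarrow> bool" where
  "Linf01 f \<longleftrightarrow> f \<in> borel_measurable (restrict_space lebesgue {0<..<1}) \<and>
     (\<exists>B. AE t in lebesgue. t \<in> {0<..<1} \<longrightarrow> norm (f t) \<le> B)"

definition test_fun01 :: "(real \<Rightarrow> real) \<Rightarrow> bool" where
  "test_fun01 \<phi> \<longleftrightarrow> \<phi> C1_differentiable_on UNIV \<and>
     (\<exists>a b. 0 < a \<and> a \<le> b \<and> b < 1 \<and> (\<forall>t. t \<notin> {a..b} \<longrightarrow> \<phi> t = 0))"

definition weak_deriv01 :: "(real \<Rightarrow> 'a::euclidean_space) \<Rightarrow> (real \<Rightarrow> 'a) \<Rightarrow> bool" where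
  "weak_deriv01 x v \<longleftrightarrow> (\<forall>\<phi>. test_fun01 \<phi> \<longrightarrow>
     integral {0..1} (\<lambda>t. vector_derivative \<phi> (at t) *\<^sub>R x t)
       = - integral {0..1} (\<lambda>t. \<phi> t *\<^sub>R v t))"

text \<open>x belongs to W^{1,infinity}(]0,1[) (represented by its continuous representative on [0,1])
  and v is its (weak) derivative x_tau, an L-infinity function.\<close>
definition W1inf01 :: "(real \<Rightarrow> 'a::euclidean_space) \<Rightarrow> (real \<Rightarrow> 'a) \<Rightarrow> bool" where
  "W1inf01 x v \<longleftrightarrow> continuous_on {0..1} x \<and> Linf01 v \<and> weak_deriv01 x v"

definition h_deriv :: "real \<Rightarrow> (real \<Rightarrow> real^2) \<Rightarrow> real \<Rightarrow> (real \<Rightarrow> real^2) \<Rightarrow> real \<Rightarrow> real" where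
  "h_deriv L \<xi>' dL d\<xi>' t = 2 * (\<xi>' t \<bullet> d\<xi>' t) - 2 * L * dL"

end

theory Submission
  imports Defs
begin

lemma ibp:
  fixes w \<phi> \<phi>' :: "real \<Rightarrow> real"
  assumes wm: "w \<in> borel_measurable borel" and wb: "\<And>t. \<bar>w t\<bar> \<le> K"
    and d: "\<And>t. (\<phi> has_vector_derivative \<phi>' t) (at t)" and dc: "continuous_on UNIV \<phi>'"
    and p1: "\<phi> 1 = 0"
  shows "integral {0..1} (\<lambda>t. \<phi>' t * integral {0..t} w) = - integral {0..1} (\<lambda>t. \<phi> t * w t)"
proof -
  have wm2[measurable]: "w \<in> borel_measurable lborel" using wm by simp
  have pm[measurable]: "\<phi>' \<in> borel_measurable lborel"
    using dc by (simp add: borel_measurable_continuous_onI)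
  have pc: "continuous_on UNIV \<phi>"
    using d by (meson differentiable_imp_continuous_on differentiable_on_def has_vector_derivative_def differentiableI)
  have pm2[measurable]: "\<phi> \<in> borel_measurable lborel"
    using pc by (simp add: borel_measurable_continuous_onI)
  have wint: "set_integrable lborel {a..b} w" for a b :: real
    unfolding set_integrable_def
    by (rule integrableI_bounded_set[where A="{a..b}" and B=K]) (auto simp: wb indicator_def emeasure_lborel_Icc_eq)
  have W: "integral {0..t} w = (\<integral>s. (if 0 \<le> s \<and> s \<le> t then w s else 0) \<partial>lborel)" for t
  proof -
    have "integral {0..t} w = (\<integral>s. indicator {0..t} s * w s \<partial>lborel)"
      using set_borel_integral_eq_integral(2)[OF wint[of 0 t]] by (simp add: set_lebesgue_integral_def)
    also have "\<dots> = (\<integral>s. (if 0 \<le> s \<and> s \<le> t then w s else 0) \<partial>lborel)"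
      by (rule Bochner_Integration.integral_cong) (auto simp: indicator_def)
    finally show ?thesis .
  qed
  have Wcont: "continuous_on {0..1} (\<lambda>t. integral {0..t} w)"
    by (rule indefinite_integral_continuous_1) (rule set_borel_integral_eq_integral(1)[OF wint])
  have lhsint: "set_integrable lborel {0..1} (\<lambda>t. \<phi>' t * integral {0..t} w)"
    by (rule borel_integrable_atLeastAtMost') (intro continuous_intros Wcont continuous_on_subset[OF dc], auto)
  define F where "F t s = indicator {0..1::real} t * \<phi>' t * (if 0 \<le> s \<and> s \<le> t then w s else 0)" for t s
  obtain P where P: "\<And>t. t \<in> {0..1} \<Longrightarrow> \<bar>\<phi>' t\<bar> \<le> P"
    using compact_imp_bounded[OF compact_continuous_image[OF continuous_on_subset[OF dc] compact_Icc]]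
    unfolding bounded_iff by fastforce
  have Fm[measurable]: "case_prod F \<in> borel_measurable (lborel \<Otimes>\<^sub>M lborel)"
    using wm unfolding F_def by measurable
  have Fint: "integrable (lborel \<Otimes>\<^sub>M lborel) (case_prod F)"
  proof (rule integrableI_bounded_set[where A="{0..1}\<times>{0..1}" and B="P*K"])
    show "{0..1::real} \<times> {0..1::real} \<in> sets (lborel \<Otimes>\<^sub>M lborel)" by simp
    show "emeasure (lborel \<Otimes>\<^sub>M lborel) ({0..1::real} \<times> {0..1::real}) < \<infinity>"
      by (simp add: lborel.emeasure_pair_measure_Times ennreal_mult_less_top)
    show "AE x in lborel \<Otimes>\<^sub>M lborel. x \<in> {0..1} \<times> {0..1} \<longrightarrow> norm (case_prod F x) \<le> P * K"
    proof (intro AE_I2 impI)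
      fix x :: "real \<times> real" assume x: "x \<in> {0..1} \<times> {0..1}"
      obtain t s where ts: "x = (t, s)" by fastforce
      have "\<bar>F t s\<bar> \<le> \<bar>\<phi>' t\<bar> * \<bar>w s\<bar>"
        by (auto simp: F_def indicator_def abs_mult)
      also have "\<dots> \<le> P * K"
        using x ts by (intro mult_mono P wb) (auto intro: order_trans[OF abs_ge_zero P])
      finally show "norm (case_prod F x) \<le> P * K" using ts by simp
    qed
    show "AE x in lborel \<Otimes>\<^sub>M lborel. x \<notin> {0..1} \<times> {0..1} \<longrightarrow> case_prod F x = 0"
      by (intro AE_I2) (auto simp: F_def indicator_def split: prod.splits)
  qed (fact Fm)
  have "integral {0..1} (\<lambda>t. \<phi>' t * integral {0..t} w) = (\<integral>t. indicator {0..1} t * (\<phi>' t * integral {0..t} w) \<partial>lborel)"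
    using set_borel_integral_eq_integral(2)[OF lhsint] by (simp add: set_lebesgue_integral_def)
  also have "\<dots> = (\<integral>t. (\<integral>s. F t s \<partial>lborel) \<partial>lborel)"
    by (rule Bochner_Integration.integral_cong) (auto simp: F_def W indicator_def)
  also have "\<dots> = (\<integral>s. (\<integral>t. F t s \<partial>lborel) \<partial>lborel)"
    using lborel_pair.Fubini_integral[OF Fint] by simp
  also have "\<dots> = (\<integral>s. indicator {0..1} s * (- (\<phi> s * w s)) \<partial>lborel)"
  proof (rule Bochner_Integration.integral_cong)
    fix s :: real
    show "(\<integral>t. F t s \<partial>lborel) = indicator {0..1} s * (- (\<phi> s * w s))"
    proof (cases "s \<in> {0..1}")
      case True
      have "(\<lambda>t. F t s) = (\<lambda>t. w s * (indicator {s..1} t * \<phi>' t))"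
        using True by (auto simp: F_def indicator_def)
      moreover have "(\<integral>t. indicator {s..1} t * \<phi>' t \<partial>lborel) = \<phi> 1 - \<phi> s"
      proof -
        have i: "set_integrable lborel {s..1} \<phi>'"
          by (rule borel_integrable_atLeastAtMost') (rule continuous_on_subset[OF dc], auto)
        have "(\<integral>t. indicator {s..1} t * \<phi>' t \<partial>lborel) = integral {s..1} \<phi>'"
          using set_borel_integral_eq_integral(2)[OF i] by (simp add: set_lebesgue_integral_def)
        also have "\<dots> = \<phi> 1 - \<phi> s"
          using True by (intro integral_unique fundamental_theorem_of_calculus)
            (auto intro: has_vector_derivative_at_within d)
        finally show ?thesis .
      qed
      ultimately show ?thesis using True p1 by (simp add: indicator_def)
    next
      case False
      then have "(\<lambda>t. F t s) = (\<lambda>t. 0)" by (auto simp: F_def indicator_def fun_eq_iff)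
      then show ?thesis using False by simp
    qed
  qed simp
  also have "\<dots> = - (\<integral>s. indicator {0..1} s * (\<phi> s * w s) \<partial>lborel)"
    by simp
  also have "\<dots> = - integral {0..1} (\<lambda>t. \<phi> t * w t)"
  proof -
    have i: "set_integrable lborel {0..1} (\<lambda>t. \<phi> t * w t)"
    proof -
      obtain Q where Q: "\<And>t. t \<in> {0..1} \<Longrightarrow> \<bar>\<phi> t\<bar> \<le> Q"
        using compact_imp_bounded[OF compact_continuous_image[OF continuous_on_subset[OF pc] compact_Icc]]
        unfolding bounded_iff by fastforce
      show ?thesis unfolding set_integrable_def
        by (rule integrableI_bounded_set[where A="{0..1}" and B="Q*K"])
          (auto simp: indicator_def abs_mult emeasure_lborel_Icc_eq intro!: AE_I2 mult_mono Q wb order_trans[OF abs_ge_zero Q])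
    qed
    show ?thesis using set_borel_integral_eq_integral(2)[OF i] by (simp add: set_lebesgue_integral_def)
  qed
  finally show ?thesis .
qed

lemma borel_ver:
  fixes f :: "real \<Rightarrow> real"
  assumes "f \<in> borel_measurable lebesgue" "lo \<le> hi"
    "AE t in lebesgue. t \<in> S \<longrightarrow> lo \<le> f t \<and> f t \<le> hi"
  shows "\<exists>f'. f' \<in> borel_measurable borel \<and> (\<forall>t. lo \<le> f' t \<and> f' t \<le> hi) \<and>
           (AE t in lebesgue. t \<in> S \<longrightarrow> f' t = f t)"
proof -
  obtain g where g: "g \<in> borel_measurable lborel" "AE x in lborel. f x = g x"
    using completion_ex_borel_measurable_real[OF assms(1)] by blast
  have g2: "AE x in lebesgue. f x = g x" using AE_completion[OF g(2)] .
  define f' where "f' t = max lo (min hi (g t))" for t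
  have "f' \<in> borel_measurable borel" using g(1) unfolding f'_def by simp
  moreover have "\<forall>t. lo \<le> f' t \<and> f' t \<le> hi" using assms(2) by (auto simp: f'_def)
  moreover have "AE t in lebesgue. t \<in> S \<longrightarrow> f' t = f t"
    using g2 assms(3) by eventually_elim (auto simp: f'_def)
  ultimately show ?thesis by blast
qed

theorem theorem2:
  fixes L c :: real and \<xi> \<xi>' :: "real \<Rightarrow> real^2" and u xO xD :: "real^2"
  assumes "W1inf01 \<xi> \<xi>'" and "\<xi> 0 = xO" and "\<xi> 1 = xD"
    and "L > 0" and "c > 0"
    and "AE t in lebesgue. t \<in> {0<..<1} \<longrightarrow> \<xi>' t \<bullet> u \<ge> c"
  shows "\<forall>g :: real \<Rightarrow> real. Linf01 g \<longrightarrow>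
           (\<exists>dL :: real. \<exists>d\<xi> d\<xi>' :: real \<Rightarrow> real^2.
              W1inf01 d\<xi> d\<xi>' \<and> d\<xi> 0 = 0 \<and> d\<xi> 1 = 0 \<and>
              (AE t in lebesgue. t \<in> {0<..<1} \<longrightarrow> h_deriv L \<xi>' dL d\<xi>' t = g t))"
proof (intro allI impI)
  fix g :: "real \<Rightarrow> real"
  assume "Linf01 g"
  then obtain Bg where gm: "g \<in> borel_measurable (restrict_space lebesgue {0<..<1})"
    and gB: "AE t in lebesgue. t \<in> {0<..<1} \<longrightarrow> norm (g t) \<le> Bg"
    unfolding Linf01_def by blast
  from assms(1) obtain Bx where xm: "\<xi>' \<in> borel_measurable (restrict_space lebesgue {0<..<1})"
    and xB: "AE t in lebesgue. t \<in> {0<..<1} \<longrightarrow> norm (\<xi>' t) \<le> Bx"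
    unfolding W1inf01_def Linf01_def by blast
  note cpos = \<open>c > 0\<close>
  define a where "a t = \<xi>' t \<bullet> u" for t
  define M where "M = max (Bx * norm u) c"
  define K2 where "K2 = \<bar>Bg\<bar> / (2 * c)"
  have Mpos: "M > 0" "c \<le> M" using cpos by (auto simp: M_def)
  have am: "a \<in> borel_measurable (restrict_space lebesgue {0<..<1})"
    using xm unfolding a_def by measurable
  have sets01: "{0<..<1::real} \<inter> space lebesgue \<in> sets lebesgue" by simp
  define f1 where "f1 t = (if t \<in> {0<..<1} then 1 / a t else 0)" for t
  define f2 where "f2 t = (if t \<in> {0<..<1} then g t / (2 * a t) else 0)" for t
  have f1m: "f1 \<in> borel_measurable lebesgue"
  proof -
    have "(\<lambda>t. 1 / a t) \<in> borel_measurable (restrict_space lebesgue {0<..<1})"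
      using am by measurable
    then show ?thesis unfolding f1_def using measurable_restrict_space_iff[OF sets01, of 0 borel "\<lambda>t. 1 / a t"] by simp
  qed
  have f2m: "f2 \<in> borel_measurable lebesgue"
  proof -
    have "(\<lambda>t. g t / (2 * a t)) \<in> borel_measurable (restrict_space lebesgue {0<..<1})"
      using am gm by measurable
    then show ?thesis unfolding f2_def using measurable_restrict_space_iff[OF sets01, of 0 borel "\<lambda>t. g t / (2 * a t)"] by simp
  qed
  have aAE: "AE t in lebesgue. t \<in> {0<..<1} \<longrightarrow> c \<le> a t \<and> a t \<le> M"
    using assms(6) xB
  proof eventually_elim
    case (elim t)
    show ?case
    proof
      assume t: "t \<in> {0<..<1}"
      have "a t \<le> \<bar>\<xi>' t \<bullet> u\<bar>" unfolding a_def by simp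
      also have "\<dots> \<le> norm (\<xi>' t) * norm u" by (rule Cauchy_Schwarz_ineq2)
      also have "\<dots> \<le> Bx * norm u" using elim t by (intro mult_right_mono) auto
      finally show "c \<le> a t \<and> a t \<le> M" using elim t by (auto simp: a_def M_def)
    qed
  qed
  have f1AE: "AE t in lebesgue. t \<in> {0<..<1} \<longrightarrow> 1/M \<le> f1 t \<and> f1 t \<le> 1/c"
    using aAE
  proof eventually_elim
    case (elim t)
    then show ?case using cpos Mpos by (auto simp: f1_def intro: frac_le)
  qed
  have f2AE: "AE t in lebesgue. t \<in> {0<..<1} \<longrightarrow> -K2 \<le> f2 t \<and> f2 t \<le> K2"
    using aAE gB
  proof eventually_elim
    case (elim t)
    show ?case
    proof
      assume t: "t \<in> {0<..<1}"
      have "\<bar>f2 t\<bar> = \<bar>g t\<bar> / (2 * a t)" using t elim cpos by (simp add: f2_def abs_divide)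
      also have "\<dots> \<le> \<bar>Bg\<bar> / (2 * c)" using t elim cpos
        by (intro frac_le) auto
      finally show "-K2 \<le> f2 t \<and> f2 t \<le> K2" unfolding K2_def by linarith
    qed
  qed
  obtain q where qm: "q \<in> borel_measurable borel" and qb: "\<And>t. 1/M \<le> q t \<and> q t \<le> 1/c"
    and qAE: "AE t in lebesgue. t \<in> {0<..<1} \<longrightarrow> q t = f1 t"
  proof -
    have "1/M \<le> 1/c" using Mpos cpos by (intro divide_left_mono) auto
    then show ?thesis using borel_ver[OF f1m _ f1AE] that by blast
  qed
  obtain r where rm: "r \<in> borel_measurable borel" and rb: "\<And>t. -K2 \<le> r t \<and> r t \<le> K2"
    and rAE: "AE t in lebesgue. t \<in> {0<..<1} \<longrightarrow> r t = f2 t"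
    using borel_ver[OF f2m _ f2AE] cpos by (auto simp: K2_def)
  have bint: "f integrable_on {a..b}" if "f \<in> borel_measurable borel" "\<And>t. \<bar>f t\<bar> \<le> B"
    for f :: "real \<Rightarrow> real" and B a b
  proof -
    have "set_integrable lborel {a..b} f"
      unfolding set_integrable_def using that
      by (intro integrableI_bounded_set[where A="{a..b}" and B=B])
         (auto simp: indicator_def emeasure_lborel_Icc_eq)
    then show ?thesis by (rule set_borel_integral_eq_integral(1))
  qed
  have qb': "\<bar>q t\<bar> \<le> 1/c" for t using qb[of t] Mpos
    by (metis abs_of_nonneg order_trans less_eq_real_def zero_less_divide_1_iff)
  have rb': "\<bar>r t\<bar> \<le> K2" for t using rb[of t] by linarith
  have qi: "q integrable_on {0..1}" by (rule bint[OF qm qb'])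
  have ri: "r integrable_on {0..1}" by (rule bint[OF rm rb'])
  define A where "A = integral {0..1} q"
  define G where "G = integral {0..1} r"
  have "1/M \<le> A"
  proof -
    have "integral {0..1::real} (\<lambda>_. 1/M) \<le> integral {0..1} q"
      using qb qi by (intro integral_le) auto
    then show ?thesis by (simp add: A_def)
  qed
  then have Apos: "A > 0" using Mpos by (meson less_le_trans zero_less_divide_1_iff)
  define dL where "dL = - G / (L * A)"
  define w where "w t = r t + (L * dL) * q t" for t
  define Kw where "Kw = K2 + \<bar>L * dL\<bar> * (1/c)"
  have wm: "w \<in> borel_measurable borel" using qm rm unfolding w_def by measurable
  have wb: "\<bar>w t\<bar> \<le> Kw" for t
  proof -
    have "\<bar>w t\<bar> \<le> \<bar>r t\<bar> + \<bar>L * dL\<bar> * \<bar>q t\<bar>" unfolding w_def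
      by (metis abs_mult abs_triangle_ineq)
    also have "\<dots> \<le> Kw" unfolding Kw_def using rb' qb' by (intro add_mono mult_left_mono) auto
    finally show ?thesis .
  qed
  have wi: "w integrable_on {0..1}" by (rule bint[OF wm wb])
  have wint: "integral {0..1} w = 0"
  proof -
    have "integral {0..1} w = G + (L * dL) * A"
      unfolding w_def G_def A_def
      by (simp add: integral_add[OF ri integrable_on_mult_right[OF qi]])
    also have "\<dots> = 0" using Apos \<open>L > 0\<close> by (simp add: dL_def)
    finally show ?thesis .
  qed
  define d\<xi> where "d\<xi> t = integral {0..t} w *\<^sub>R u" for t
  define d\<xi>' where "d\<xi>' t = w t *\<^sub>R u" for t
  have W1: "W1inf01 d\<xi> d\<xi>'"
    unfolding W1inf01_def
  proof (intro conjI)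
    show "continuous_on {0..1} d\<xi>" unfolding d\<xi>_def
      by (intro continuous_intros indefinite_integral_continuous_1 wi)
    show "Linf01 d\<xi>'" unfolding Linf01_def
    proof
      have "d\<xi>' \<in> borel_measurable borel" using wm unfolding d\<xi>'_def by measurable
      then have "d\<xi>' \<in> borel_measurable lebesgue"
        by (intro measurable_completion) simp
      then show "d\<xi>' \<in> borel_measurable (restrict_space lebesgue {0<..<1})"
        by (rule measurable_restrict_space1)
      show "\<exists>B. AE t in lebesgue. t \<in> {0<..<1} \<longrightarrow> norm (d\<xi>' t) \<le> B"
        by (intro exI[of _ "Kw * norm u"] AE_I2) (auto simp: d\<xi>'_def intro: mult_right_mono wb)
    qed
    show "weak_deriv01 d\<xi> d\<xi>'" unfolding weak_deriv01_def
    proof (intro allI impI)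
      fix \<phi> :: "real \<Rightarrow> real"
      assume "test_fun01 \<phi>"
      then obtain a0 b0 where C1: "\<phi> C1_differentiable_on UNIV" and ab: "0 < a0" "a0 \<le> b0" "b0 < 1"
        and supp: "\<And>t. t \<notin> {a0..b0} \<Longrightarrow> \<phi> t = 0"
        unfolding test_fun01_def by blast
      obtain D where D: "\<And>t. (\<phi> has_vector_derivative D t) (at t)" and Dc: "continuous_on UNIV D"
        using C1 unfolding C1_differentiable_on_def by blast
      have vd: "vector_derivative \<phi> (at t) = D t" for t using D by (rule vector_derivative_at)
      have p1: "\<phi> 1 = 0" using supp ab by auto
      have I: "integral {0..1} (\<lambda>t. D t * integral {0..t} w) = - integral {0..1} (\<lambda>t. \<phi> t * w t)"
        by (rule ibp[OF wm wb D Dc p1])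
      have i1: "(\<lambda>t. D t * integral {0..t} w) integrable_on {0..1}"
        by (intro integrable_continuous_interval continuous_intros indefinite_integral_continuous_1 wi
            continuous_on_subset[OF Dc]) auto
      have i2: "(\<lambda>t. \<phi> t * w t) integrable_on {0..1}"
      proof -
        have pc: "continuous_on UNIV \<phi>"
          using C1 C1_differentiable_on_eq differentiable_imp_continuous_on differentiable_on_def by blast
        obtain Q where Q: "\<And>t. t \<in> {0..1} \<Longrightarrow> \<bar>\<phi> t\<bar> \<le> Q"
          using compact_imp_bounded[OF compact_continuous_image[OF continuous_on_subset[OF pc] compact_Icc]]
          unfolding bounded_iff by fastforce
        have [measurable]: "\<phi> \<in> borel_measurable borel"
          using pc by (simp add: borel_measurable_continuous_onI)
        note wm[measurable]
        have "set_integrable lborel {0..1} (\<lambda>t. \<phi> t * w t)"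
          unfolding set_integrable_def
          by (intro integrableI_bounded_set[where A="{0..1}" and B="Q*Kw"])
            (auto simp: indicator_def abs_mult emeasure_lborel_Icc_eq borel_measurable_continuous_onI
              intro!: AE_I2 mult_mono Q wb order_trans[OF abs_ge_zero Q])
        then show ?thesis by (rule set_borel_integral_eq_integral(1))
      qed
      have "integral {0..1} (\<lambda>t. vector_derivative \<phi> (at t) *\<^sub>R d\<xi> t)
          = integral {0..1} (\<lambda>t. (D t * integral {0..t} w) *\<^sub>R u)"
        by (simp add: vd d\<xi>_def)
      also have "\<dots> = integral {0..1} (\<lambda>t. D t * integral {0..t} w) *\<^sub>R u"
        by (rule integral_unique[OF has_integral_scaleR_left[OF integrable_integral[OF i1]]])
      also have "\<dots> = (- integral {0..1} (\<lambda>t. \<phi> t * w t)) *\<^sub>R u" by (simp only: I)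
      also have "\<dots> = - (integral {0..1} (\<lambda>t. (\<phi> t * w t) *\<^sub>R u))"
        using integral_unique[OF has_integral_scaleR_left[OF integrable_integral[OF i2]], of u] by simp
      also have "\<dots> = - integral {0..1} (\<lambda>t. \<phi> t *\<^sub>R d\<xi>' t)"
        by (simp add: d\<xi>'_def)
      finally show "integral {0..1} (\<lambda>t. vector_derivative \<phi> (at t) *\<^sub>R d\<xi> t)
          = - integral {0..1} (\<lambda>t. \<phi> t *\<^sub>R d\<xi>' t)" .
    qed
  qed
  have e0: "d\<xi> 0 = 0" by (simp add: d\<xi>_def)
  have e1: "d\<xi> 1 = 0" by (simp add: d\<xi>_def wint)
  have "AE t in lebesgue. t \<in> {0<..<1} \<longrightarrow> h_deriv L \<xi>' dL d\<xi>' t = g t"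
    using aAE qAE rAE
  proof eventually_elim
    case (elim t)
    show ?case
    proof
      assume t: "t \<in> {0<..<1}"
      have an: "a t \<noteq> 0" using elim t cpos by auto
      have "h_deriv L \<xi>' dL d\<xi>' t = 2 * (w t * a t) - 2 * L * dL"
        by (simp add: h_deriv_def d\<xi>'_def a_def)
      also have "\<dots> = g t" using elim t an
        by (simp add: w_def f1_def f2_def field_simps)
      finally show "h_deriv L \<xi>' dL d\<xi>' t = g t" .
    qed
  qed
  then show "\<exists>dL d\<xi> d\<xi>'. W1inf01 d\<xi> d\<xi>' \<and> d\<xi> 0 = 0 \<and> d\<xi> 1 = 0 \<and>
              (AE t in lebesgue. t \<in> {0<..<1} \<longrightarrow> h_deriv L \<xi>' dL d\<xi>' t = g t)"
    using W1 e0 e1 by blast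
qed

end
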